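(* The tree $T_A$ has proper thinness equal to $3$.
   Context: For a graph $G=(V,E)$, a linear ordering $<$ of $V$ and a partition of $V$ into classes are called strongly consistent if for every triple $r<s<t$ of vertices with $rt\in E$: if $r$ and $s$ belong to the same class then $st\in E$, and if $s$ and $t$ belong to the same class then $rs\in E$. The proper thinness $\mathrm{pthin}(G)$ is the minimum $k$ such that some ordering of $V$ and some partition of $V$ into $k$ classes are strongly consistent. $T_0$ is the subdivided star $K_{1,5}$: a center adjacent to five vertices, each of which is adjacent to one further leaf (11 vertices). $T_A$ is the tree obtained from three disjoint copies of $T_0$ and a new vertex $v_0$ by making $v_0$ adjacent to one leaf of each copy (34 vertices; $v_0$ is at distance $3$ from each copy's center). *)

theory Defs
  imports Main
begin

text \<open>A graph is given by a vertex set V and a symmetric edge predicate E.\<close>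

definition strongly_consistent ::
  "'a set \<Rightarrow> ('a \<Rightarrow> 'a \<Rightarrow> bool) \<Rightarrow> 'a list \<Rightarrow> ('a \<Rightarrow> nat) \<Rightarrow> bool" where
  "strongly_consistent V E ord cls \<longleftrightarrow>
     (\<forall>i j l. i < j \<and> j < l \<and> l < length ord \<and> E (ord ! i) (ord ! l) \<longrightarrow>
        (cls (ord ! i) = cls (ord ! j) \<longrightarrow> E (ord ! j) (ord ! l)) \<and>
        (cls (ord ! j) = cls (ord ! l) \<longrightarrow> E (ord ! i) (ord ! j)))"

definition pthin_with :: "'a set \<Rightarrow> ('a \<Rightarrow> 'a \<Rightarrow> bool) \<Rightarrow> nat \<Rightarrow> bool" where
  "pthin_with V E k \<longleftrightarrow>
     (\<exists>ord cls. distinct ord \<and> set ord = V \<and> cls ` V \<subseteq> {..<k} \<and>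
        strongly_consistent V E ord cls)"

definition pthin :: "'a set \<Rightarrow> ('a \<Rightarrow> 'a \<Rightarrow> bool) \<Rightarrow> nat" where
  "pthin V E = (LEAST k. pthin_with V E k)"

text \<open>The tree T_A on vertices 0..33. Copy c (c = 0,1,2) of T_0 uses vertices
 11c .. 11c+10: center 11c, middle vertices 11c+1..11c+5 adjacent to the center,
 leaf 11c+i+5 adjacent to 11c+i (i = 1..5). Vertex 33 is v_0, adjacent to leaf 11c+6
 of each copy.\<close>

definition TA_V :: "nat set" where
  "TA_V = {..<34}"

definition TA_arc :: "nat \<Rightarrow> nat \<Rightarrow> bool" where
  "TA_arc u v \<longleftrightarrow>
     (\<exists>c<3. \<exists>i\<in>{1..5}. (u = 11*c \<and> v = 11*c + i) \<or> (u = 11*c + i \<and> v = 11*c + i + 5))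
     \<or> (\<exists>c<3. u = 33 \<and> v = 11*c + 6)"

definition TA_E :: "nat \<Rightarrow> nat \<Rightarrow> bool" where
  "TA_E u v \<longleftrightarrow> TA_arc u v \<or> TA_arc v u"

end

theory Submission
  imports Defs
begin


definition TA_list :: "(nat \<times> nat) list" where
  "TA_list = concat (map (\<lambda>c. concat (map (\<lambda>i. [(11*c,11*c+i),(11*c+i,11*c+i+5)]) [1..<6])) [0..<3])
     @ map (\<lambda>c. (33, 11*c+6)) [0..<3]"

lemma TA_arc_list: "TA_arc u v \<longleftrightarrow> (u,v) \<in> set TA_list"
  unfolding TA_arc_def TA_list_def
  apply (auto simp: atLeastAtMost_iff)
   apply (rule_tac x=c in bexI, rule_tac x=i in bexI; simp)+
  done

lemma TA_E_list: "TA_E u v \<longleftrightarrow> (u,v) \<in> set TA_list \<or> (v,u) \<in> set TA_list"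
  by (simp add: TA_E_def TA_arc_list)

lemma TA_list_eval: "TA_list = [(0,1),(1,6),(0,2),(2,7),(0,3),(3,8),(0,4),(4,9),(0,5),(5,10),
 (11,12),(12,17),(11,13),(13,18),(11,14),(14,19),(11,15),(15,20),(11,16),(16,21),
 (22,23),(23,28),(22,24),(24,29),(22,25),(25,30),(22,26),(26,31),(22,27),(27,32),
 (33,6),(33,17),(33,28)]"
  by (simp add: TA_list_def upt_rec)



abbreviation "MM \<equiv> {1,2,3,4,5::nat}"
abbreviation "WW \<equiv> {..<11::nat}"

lemma TA_E_sym: "TA_E u v = TA_E v u" by (auto simp: TA_E_def)

lemma E1: "x \<in> MM \<Longrightarrow> TA_E 0 x \<and> TA_E x 0"
  by (elim insertE emptyE; simp add: TA_E_list TA_list_eval)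
lemma E2: "x \<in> MM \<Longrightarrow> TA_E x (x+5) \<and> TA_E (x+5) x"
  by (elim insertE emptyE; simp add: TA_E_list TA_list_eval)
lemma N1: "x \<in> MM \<Longrightarrow> y \<in> MM \<Longrightarrow> \<not> TA_E x y"
  by (elim insertE emptyE; simp add: TA_E_list TA_list_eval)
lemma N2: "x \<in> MM \<Longrightarrow> y \<in> MM \<Longrightarrow> x \<noteq> y \<Longrightarrow> \<not> TA_E (x+5) y \<and> \<not> TA_E y (x+5)"
  by (elim insertE emptyE; simp add: TA_E_list TA_list_eval)
lemma N3: "x \<in> MM \<Longrightarrow> \<not> TA_E 0 (x+5) \<and> \<not> TA_E (x+5) 0"
  by (elim insertE emptyE; simp add: TA_E_list TA_list_eval)

definition Kp :: "(nat \<Rightarrow> int) \<Rightarrow> (nat \<Rightarrow> nat) \<Rightarrow> bool" where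
  "Kp p cls \<longleftrightarrow> (\<forall>r\<in>WW. \<forall>s\<in>WW. \<forall>t\<in>WW. TA_E r t \<longrightarrow> p r < p s \<longrightarrow> p s < p t \<longrightarrow>
     (cls s = cls r \<longrightarrow> TA_E s t) \<and> (cls s = cls t \<longrightarrow> TA_E r s))"

lemma Kp_rev: "Kp p cls \<Longrightarrow> Kp (\<lambda>v. - p v) cls"
  unfolding Kp_def by (metis TA_E_sym neg_less_iff_less)

lemma KpD: "Kp p cls \<Longrightarrow> r \<in> WW \<Longrightarrow> s \<in> WW \<Longrightarrow> t \<in> WW \<Longrightarrow> TA_E r t \<Longrightarrow> p r < p s \<Longrightarrow> p s < p t \<Longrightarrow>
     (cls s = cls r \<longrightarrow> TA_E s t) \<and> (cls s = cls t \<longrightarrow> TA_E r s)"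
  unfolding Kp_def by blast

lemma MW: "x \<in> MM \<Longrightarrow> x \<in> WW \<and> x + 5 \<in> WW" by auto

lemma chain:
  fixes p :: "nat \<Rightarrow> int"
  assumes fin: "finite S" and inj: "inj_on p S" and k: "k \<le> card S"
  shows "\<exists>xs. length xs = k \<and> set xs \<subseteq> S \<and> sorted_wrt (\<lambda>a b. p a < p b) xs"
proof -
  define L where "L = sorted_list_of_set (p ` S)"
  have sL: "sorted_wrt (<) L" unfolding L_def by simp
  have lL: "length L = card S" unfolding L_def using card_image[OF inj] by simp
  have setL: "set L = p ` S" unfolding L_def using fin by simp
  define xs where "xs = map (inv_into S p) (take k L)"
  have len: "length xs = k" unfolding xs_def using k lL by simp
  have sub: "set xs \<subseteq> S" unfolding xs_def using setL
    by (auto dest!: in_set_takeD intro: inv_into_into)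
  have "sorted_wrt (<) (take k L)" using sL by (rule sorted_wrt_take)
  moreover have "\<forall>y\<in>set (take k L). p (inv_into S p y) = y"
    using setL by (auto dest!: in_set_takeD intro: f_inv_into_f)
  ultimately have "sorted_wrt (\<lambda>a b. p a < p b) xs"
    unfolding xs_def sorted_wrt_map
    by (smt (verit) sorted_wrt_mono_rel) 
  then show ?thesis using len sub by blast
qed

locale setting =
  fixes p :: "nat \<Rightarrow> int" and cls :: "nat \<Rightarrow> nat"
  assumes K: "Kp p cls"
    and inj: "inj_on p WW"
    and two: "\<And>v. v \<in> WW \<Longrightarrow> cls v < 2"
begin

lemma two': "x \<in> WW \<Longrightarrow> y \<in> WW \<Longrightarrow> z \<in> WW \<Longrightarrow> cls x \<noteq> cls y \<Longrightarrow> cls z = cls x \<or> cls z = cls y"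
  using two[of x] two[of y] two[of z] by linarith

lemma pne: "x \<in> WW \<Longrightarrow> y \<in> WW \<Longrightarrow> x \<noteq> y \<Longrightarrow> p x \<noteq> p y"
  using inj by (meson inj_on_contraD)

lemma LX: assumes "x \<in> MM" "y \<in> MM" "p 0 < p x" "p x < p y" shows "cls x \<noteq> cls 0"
  using KpD[OF K, of 0 x y] E1[of y] N1[of x y] assms by auto

lemma LXm: assumes "x \<in> MM" "y \<in> MM" "p y < p x" "p x < p 0" shows "cls x \<noteq> cls 0"
  using KpD[OF K, of y x 0] E1[of y] N1[of y x] assms by auto

lemma Lf: assumes A: "a \<in> MM" and B: "b \<in> MM" and D: "d \<in> MM" and o1: "p 0 < p a" and o2: "p a < p b" and o3: "p b < p d"
  shows "p (a+5) < p 0"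
proof -
  have W: "a \<in> WW" "b \<in> WW" "a+5 \<in> WW" "(0::nat) \<in> WW" using MW[OF A] MW[OF B] by auto
  have ca: "cls a \<noteq> cls 0" using LX[OF A D] o1 o2 o3 by linarith
  have cb: "cls b \<noteq> cls 0" using LX[OF B D] o1 o2 o3 by linarith
  have ab: "a \<noteq> b" using o2 by auto
  have cab: "cls a = cls b" using two'[OF W(1) W(4) W(2)] ca cb by auto
  have n1: "p (a+5) \<noteq> p 0" using pne[OF W(3) W(4)] by auto
  have n2: "p (a+5) \<noteq> p b" using pne[OF W(3) W(2)] A B by auto
  have e0b: "TA_E 0 b" using E1[OF B] by blast
  have eaa: "TA_E a (a+5)" using E2[OF A] by blast
  have nn: "\<not> TA_E (a+5) b" "\<not> TA_E b (a+5)" using N2[OF A B ab] by auto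
  have n3: "\<not> TA_E 0 (a+5)" using N3[OF A] by auto
  show ?thesis
  proof (rule ccontr)
    assume "\<not> ?thesis"
    then have g: "p 0 < p (a+5)" using n1 by auto
    show False
    proof (cases "p (a+5) < p b")
      case True
      have "(cls (a+5) = cls 0 \<longrightarrow> TA_E (a+5) b) \<and> (cls (a+5) = cls b \<longrightarrow> TA_E 0 (a+5))"
        using KpD[OF K W(4) W(3) W(2) e0b g True] .
      moreover have "cls (a+5) = cls 0 \<or> cls (a+5) = cls b" using two'[OF W(4) W(2) W(3)] cb by auto
      ultimately show False using nn n3 by blast
    next
      case False
      then have "p b < p (a+5)" using n2 by auto
      then have "(cls b = cls a \<longrightarrow> TA_E b (a+5))"
        using KpD[OF K W(1) W(2) W(3) eaa o2] by blast
      then show False using nn cab by auto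
    qed
  qed
qed

lemma R4: assumes A: "a \<in> MM" and A': "a' \<in> MM" and B: "b \<in> MM" and D: "d \<in> MM"
  and o: "p 0 < p a" "p a < p a'" "p a' < p b" "p b < p d"
  shows False
proof -
  have W: "a \<in> WW" "a' \<in> WW" "a'+5 \<in> WW" using MW[OF A] MW[OF A'] by auto
  have l: "p (a'+5) < p 0" using Lf[OF A' B D] o by linarith
  have ca: "cls a \<noteq> cls 0" using LX[OF A D] o by linarith
  have cb: "cls a' \<noteq> cls 0" using LX[OF A' D] o by linarith
  have cab: "cls a = cls a'" using two'[OF W(1) _ W(2), of 0] ca cb by auto
  have aa: "a' \<noteq> a" using o by auto
  have e: "TA_E (a'+5) a'" using E2[OF A'] by blast
  have "cls a = cls a' \<longrightarrow> TA_E (a'+5) a"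
    using KpD[OF K W(3) W(1) W(2) e] l o by linarith
  then show False using N2[OF A' A aa] cab by auto
qed

lemma R3L2: assumes A: "a \<in> MM" and B: "b \<in> MM" and D: "d \<in> MM" and Ee: "e \<in> MM" and F: "f \<in> MM"
  and o: "p e < p f" "p f < p 0" "p 0 < p a" "p a < p b" "p b < p d"
  shows False
proof -
  have W: "a \<in> WW" "f \<in> WW" "a+5 \<in> WW" "(0::nat) \<in> WW" using MW[OF A] MW[OF F] by auto
  have l: "p (a+5) < p 0" using Lf[OF A B D] o by linarith
  have ca: "cls a \<noteq> cls 0" using LX[OF A D] o by linarith
  have cf: "cls f \<noteq> cls 0" using LXm[OF F Ee] o by linarith
  have caf: "cls f = cls a" using two'[OF W(1) W(4) W(2)] ca cf by auto
  have af: "a \<noteq> f" using o by auto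
  have n2: "p (a+5) \<noteq> p f" using pne[OF W(3) W(2)] A F by auto
  have e1: "TA_E (a+5) a" using E2[OF A] by blast
  have e2: "TA_E f 0" using E1[OF F] by blast
  have nn: "\<not> TA_E (a+5) f" "\<not> TA_E f (a+5)" using N2[OF A F af] by auto
  have n3: "\<not> TA_E (a+5) 0" using N3[OF A] by auto
  show False
  proof (cases "p (a+5) < p f")
    case True
    have "cls f = cls a \<longrightarrow> TA_E (a+5) f"
      using KpD[OF K W(3) W(2) W(1) e1 True] o l by linarith
    then show False using nn caf by auto
  next
    case False
    then have g: "p f < p (a+5)" using n2 by auto
    have "(cls (a+5) = cls f \<longrightarrow> TA_E (a+5) 0) \<and> (cls (a+5) = cls 0 \<longrightarrow> TA_E f (a+5))"
      using KpD[OF K W(2) W(3) W(4) e2 g l] .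
    moreover have "cls (a+5) = cls 0 \<or> cls (a+5) = cls f" using two'[OF W(4) W(2) W(3)] cf by auto
    ultimately show False using nn n3 by blast
  qed
qed

lemma injM: "inj_on p S" if "S \<subseteq> WW" for S
  using inj that by (rule inj_on_subset)

lemma no4: assumes "4 \<le> card {x\<in>MM. p 0 < p x}" shows False
proof -
  obtain xs where xs: "length xs = 4" "set xs \<subseteq> {x\<in>MM. p 0 < p x}" "sorted_wrt (\<lambda>a b. p a < p b) xs"
  proof -
    have sub: "{x\<in>MM. p 0 < p x} \<subseteq> WW" by auto
    have fin: "finite {x\<in>MM. p 0 < p x}" by auto
    show ?thesis using chain[OF fin injM[OF sub] assms] that by blast
  qed
  then obtain a a' b d where "xs = [a,a',b,d]"
    by (auto simp: numeral_eq_Suc length_Suc_conv)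
  then show False using xs R4[of a a' b d] by auto
qed

lemma no32: assumes "3 \<le> card {x\<in>MM. p 0 < p x}" "2 \<le> card {x\<in>MM. p x < p 0}" shows False
proof -
  obtain xs where xs: "length xs = 3" "set xs \<subseteq> {x\<in>MM. p 0 < p x}" "sorted_wrt (\<lambda>a b. p a < p b) xs"
  proof -
    have sub: "{x\<in>MM. p 0 < p x} \<subseteq> WW" by auto
    have fin: "finite {x\<in>MM. p 0 < p x}" by auto
    show ?thesis using chain[OF fin injM[OF sub] assms(1)] that by blast
  qed
  then obtain a b d where "xs = [a,b,d]"
    by (auto simp: numeral_eq_Suc length_Suc_conv)
  obtain ys where ys: "length ys = 2" "set ys \<subseteq> {x\<in>MM. p x < p 0}" "sorted_wrt (\<lambda>a b. p a < p b) ys"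
  proof -
    have sub: "{x\<in>MM. p x < p 0} \<subseteq> WW" by auto
    have fin: "finite {x\<in>MM. p x < p 0}" by auto
    show ?thesis using chain[OF fin injM[OF sub] assms(2)] that by blast
  qed
  then obtain e f where "ys = [e,f]"
    by (auto simp: numeral_eq_Suc length_Suc_conv)
  show False using xs ys \<open>xs = [a,b,d]\<close> \<open>ys = [e,f]\<close> R3L2[of a b d e f] by auto
qed

lemma split5: "card {x\<in>MM. p 0 < p x} + card {x\<in>MM. p x < p 0} = 5"
proof -
  have d: "{x\<in>MM. p 0 < p x} \<inter> {x\<in>MM. p x < p 0} = {}" by auto
  have u: "{x\<in>MM. p 0 < p x} \<union> {x\<in>MM. p x < p 0} = MM"
  proof -
    have "p x \<noteq> p 0" if "x \<in> MM" for x using pne[of x 0] that by auto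
    then show ?thesis by (auto simp: neq_iff)
  qed
  have "card ({x\<in>MM. p 0 < p x} \<union> {x\<in>MM. p x < p 0}) = card {x\<in>MM. p 0 < p x} + card {x\<in>MM. p x < p 0}"
    by (rule card_Un_disjoint) (use d in auto)
  then show ?thesis using u by simp
qed

end

lemma setting_rev: "setting p cls \<Longrightarrow> setting (\<lambda>v. - p v) cls"
  unfolding setting_def using Kp_rev by (auto simp: inj_on_def)

lemma no_setting: assumes "setting p cls" shows False
proof -
  interpret s1: setting p cls by fact
  interpret s2: setting "\<lambda>v. - p v" cls by (rule setting_rev[OF assms])
  have e1: "{x\<in>MM. - p 0 < - p x} = {x\<in>MM. p x < p 0}" by auto
  have e2: "{x\<in>MM. - p x < - p 0} = {x\<in>MM. p 0 < p x}" by auto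
  have "card {x\<in>MM. p 0 < p x} + card {x\<in>MM. p x < p 0} = 5" by (rule s1.split5)
  then consider "4 \<le> card {x\<in>MM. p 0 < p x}" | "4 \<le> card {x\<in>MM. p x < p 0}"
     | "3 \<le> card {x\<in>MM. p 0 < p x} \<and> 2 \<le> card {x\<in>MM. p x < p 0}"
     | "3 \<le> card {x\<in>MM. p x < p 0} \<and> 2 \<le> card {x\<in>MM. p 0 < p x}" by linarith
  then show False
  proof cases
    case 1 then show ?thesis by (rule s1.no4)
  next
    case 2 then show ?thesis using s2.no4 e1 by simp
  next
    case 3 then show ?thesis using s1.no32 by blast
  next
    case 4 then show ?thesis using s2.no32 e1 e2 by simp
  qed
qed



lemma low2: "\<not> pthin_with TA_V TA_E 2"
proof
  assume "pthin_with TA_V TA_E 2"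
  then obtain ord cls where d: "distinct ord" and s: "set ord = TA_V" and c: "cls ` TA_V \<subseteq> {..<2}"
    and sc: "strongly_consistent TA_V TA_E ord cls"
    unfolding pthin_with_def by blast
  define q where "q = inv_into {..<length ord} ((!) ord)"
  have bij: "bij_betw ((!) ord) {..<length ord} (set ord)" by (rule bij_betw_nth[OF d]) auto
  have q1: "q v < length ord" "ord ! (q v) = v" if "v \<in> set ord" for v
  proof -
    have "v \<in> (!) ord ` {..<length ord}" using that bij by (simp add: bij_betw_def)
    then show "q v < length ord" "ord ! (q v) = v" unfolding q_def
      using inv_into_into[of v "(!) ord" "{..<length ord}"] f_inv_into_f[of v "(!) ord" "{..<length ord}"] by auto
  qed
  have WV: "WW \<subseteq> set ord" using s by (auto simp: TA_V_def)
  have "setting (\<lambda>v. int (q v)) cls"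
  proof
    show "Kp (\<lambda>v. int (q v)) cls"
      unfolding Kp_def
    proof (intro ballI impI)
      fix r s t assume r: "r \<in> WW" and s: "s \<in> WW" and t: "t \<in> WW" and e: "TA_E r t"
        and o1: "int (q r) < int (q s)" and o2: "int (q s) < int (q t)"
      have r': "r \<in> set ord" and s': "s \<in> set ord" and t': "t \<in> set ord" using r s t WV by auto
      have "(cls (ord ! q r) = cls (ord ! q s) \<longrightarrow> TA_E (ord ! q s) (ord ! q t)) \<and>
            (cls (ord ! q s) = cls (ord ! q t) \<longrightarrow> TA_E (ord ! q r) (ord ! q s))"
        using sc[unfolded strongly_consistent_def, rule_format, of "q r" "q s" "q t"] o1 o2 q1[OF t'] q1[OF r'] q1[OF s'] e
        by auto
      then show "(cls s = cls r \<longrightarrow> TA_E s t) \<and> (cls s = cls t \<longrightarrow> TA_E r s)"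
        using q1[OF t'] q1[OF r'] q1[OF s'] by auto
    qed
  next
    show "inj_on (\<lambda>v. int (q v)) WW"
    proof (rule inj_onI)
      fix x y assume "x \<in> WW" "y \<in> WW" "int (q x) = int (q y)"
      then show "x = y" using q1[of x] q1[of y] WV by (metis in_mono of_nat_eq_iff)
    qed
  next
    fix v assume "v \<in> WW" then show "cls v < 2" using c WV s by auto
  qed
  then show False by (rule no_setting)
qed


definition EL :: "nat \<Rightarrow> nat \<Rightarrow> bool" where
 "EL u v = ((u,v) \<in> set [(0,1),(1,6),(0,2),(2,7),(0,3),(3,8),(0,4),(4,9),(0,5),(5,10),
 (11,12),(12,17),(11,13),(13,18),(11,14),(14,19),(11,15),(15,20),(11,16),(16,21),
 (22,23),(23,28),(22,24),(24,29),(22,25),(25,30),(22,26),(26,31),(22,27),(27,32),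
 (33,6),(33,17),(33,28)] \<or> (v,u) \<in> set [(0,1),(1,6),(0,2),(2,7),(0,3),(3,8),(0,4),(4,9),(0,5),(5,10),
 (11,12),(12,17),(11,13),(13,18),(11,14),(14,19),(11,15),(15,20),(11,16),(16,21),
 (22,23),(23,28),(22,24),(24,29),(22,25),(25,30),(22,26),(26,31),(22,27),(27,32),
 (33,6),(33,17),(33,28)])"

fun chk1 :: "('a\<Rightarrow>'a\<Rightarrow>bool) \<Rightarrow> 'a \<times> nat \<Rightarrow> ('a \<times> nat) list \<Rightarrow> ('a \<times> nat) list \<Rightarrow> bool" where
  "chk1 E r mid [] = True"
| "chk1 E r mid (t#ys) = ((E (fst r) (fst t) \<longrightarrow> list_all (\<lambda>s. (snd s = snd r \<longrightarrow> E (fst s) (fst t)) \<and> (snd s = snd t \<longrightarrow> E (fst r) (fst s))) mid) \<and> chk1 E r (t#mid) ys)"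

fun chk :: "('a\<Rightarrow>'a\<Rightarrow>bool) \<Rightarrow> ('a \<times> nat) list \<Rightarrow> bool" where
  "chk E [] = True"
| "chk E (r#xs) = (chk1 E r [] xs \<and> chk E xs)"

definition ordC :: "(nat \<times> nat) list" where
 "ordC = [(31,2), (26,2), (32,0), (27,1), (25,1), (29,0), (22,2), (24,0), (23,0), (30,2), (28,1), (5,0), (10,2), (7,2), (2,2), (1,2), (33,1), (0,0), (6,2), (17,2), (4,1), (9,1), (8,1), (3,0), (12,2), (14,2), (19,0), (11,1), (21,0), (16,2), (15,2), (20,0), (13,2), (18,1)]"

lemma chk1_D: "chk1 E r mid ys \<Longrightarrow> k < length ys \<Longrightarrow> E (fst r) (fst (ys!k)) \<Longrightarrow> s \<in> set mid \<union> set (take k ys) \<Longrightarrow>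
   (snd s = snd r \<longrightarrow> E (fst s) (fst (ys!k))) \<and> (snd s = snd (ys!k) \<longrightarrow> E (fst r) (fst s))"
proof (induction ys arbitrary: mid k)
  case Nil then show ?case by simp
next
  case (Cons t ys)
  show ?case
  proof (cases k)
    case 0
    have "E (fst r) (fst t)" using Cons.prems(3) 0 by simp
    then have "list_all (\<lambda>s. (snd s = snd r \<longrightarrow> E (fst s) (fst t)) \<and> (snd s = snd t \<longrightarrow> E (fst r) (fst s))) mid"
      using Cons.prems(1) by simp
    moreover have "s \<in> set mid" using Cons.prems(4) 0 by simp
    ultimately show ?thesis using 0 by (simp add: list_all_iff)
  next
    case (Suc k')
    have c1: "chk1 E r (t#mid) ys" using Cons.prems(1) by simp
    have c2: "k' < length ys" using Cons.prems(2) Suc by simp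
    have c3: "E (fst r) (fst (ys!k'))" using Cons.prems(3) Suc by simp
    have c4: "s \<in> set (t#mid) \<union> set (take k' ys)" using Cons.prems(4) Suc by auto
    have "(t#ys)!k = ys!k'" using Suc by simp
    then show ?thesis using Cons.IH[OF c1 c2 c3 c4] by simp
  qed
qed

lemma chk_D: "chk E xs \<Longrightarrow> i < length xs \<Longrightarrow> chk1 E (xs!i) [] (drop (Suc i) xs)"
proof (induction xs arbitrary: i)
  case Nil then show ?case by simp
next
  case (Cons x xs) then show ?case by (cases i) auto
qed

lemma map_of_nth: assumes d: "distinct (map fst ps)" and x: "x < length ps"
  shows "the (map_of ps (fst (ps!x))) = snd (ps!x)"
proof -
  have "(fst (ps!x), snd (ps!x)) \<in> set ps" using x by simp
  then have "map_of ps (fst (ps!x)) = Some (snd (ps!x))" by (rule map_of_is_SomeI[OF d])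
  then show ?thesis by simp
qed

lemma chk_sound: assumes c: "chk E ps" and d: "distinct (map fst ps)"
  shows "strongly_consistent V E (map fst ps) (\<lambda>v. the (map_of ps v))"
  unfolding strongly_consistent_def
proof (intro allI impI)
  fix i j l assume h: "i < j \<and> j < l \<and> l < length (map fst ps) \<and> E (map fst ps ! i) (map fst ps ! l)"
  have ij: "i < j" and jl: "j < l" and l: "l < length ps" and e: "E (fst (ps!i)) (fst (ps!l))" using h by auto
  define k where "k = l - Suc i"
  define ys where "ys = drop (Suc i) ps"
  have yk: "ys ! k = ps ! l" unfolding ys_def k_def using ij jl l by simp
  have yk2: "k < length ys" unfolding ys_def k_def using ij jl l by simp
  have t1: "take k ys ! (j - Suc i) = ps ! j" unfolding ys_def k_def using ij jl l by simp
  have t2: "j - Suc i < length (take k ys)" unfolding ys_def k_def using ij jl l by simp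
  have sj: "ps ! j \<in> set (take k ys)" using nth_mem[OF t2] t1 by simp
  have c1: "chk1 E (ps!i) [] ys" unfolding ys_def using chk_D[OF c, of i] ij jl l by simp
  have e': "E (fst (ps!i)) (fst (ys!k))" using e yk by simp
  have "(snd (ps!j) = snd (ps!i) \<longrightarrow> E (fst (ps!j)) (fst (ys!k))) \<and> (snd (ps!j) = snd (ys!k) \<longrightarrow> E (fst (ps!i)) (fst (ps!j)))"
    using chk1_D[OF c1 yk2 e', of "ps!j"] sj by simp
  then have R: "(snd (ps!j) = snd (ps!i) \<longrightarrow> E (fst (ps!j)) (fst (ps!l))) \<and> (snd (ps!j) = snd (ps!l) \<longrightarrow> E (fst (ps!i)) (fst (ps!j)))"
    using yk by simp
  have m: "the (map_of ps (fst (ps!i))) = snd (ps!i)" "the (map_of ps (fst (ps!j))) = snd (ps!j)"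
     "the (map_of ps (fst (ps!l))) = snd (ps!l)"
    using map_of_nth[OF d] ij jl l by auto
  show "((\<lambda>v. the (map_of ps v)) (map fst ps ! i) = (\<lambda>v. the (map_of ps v)) (map fst ps ! j) \<longrightarrow>
          E (map fst ps ! j) (map fst ps ! l)) \<and>
         ((\<lambda>v. the (map_of ps v)) (map fst ps ! j) = (\<lambda>v. the (map_of ps v)) (map fst ps ! l) \<longrightarrow>
          E (map fst ps ! i) (map fst ps ! j))"
    using R m ij jl l by (simp add: eq_commute)
qed

lemma EL_eq: "TA_E = EL"
  by (rule ext, rule ext, simp add: EL_def TA_E_list TA_list_eval)

lemma up3: "pthin_with TA_V TA_E 3"
proof -
  have CU: "chk EL ordC" by (simp add: ordC_def EL_def)
  have d: "distinct (map fst ordC)" by (simp add: ordC_def)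
  have sub: "set (map fst ordC) \<subseteq> TA_V" by (simp add: ordC_def TA_V_def)
  have "card (set (map fst ordC)) = 34" using distinct_card[OF d] by (simp add: ordC_def)
  then have s: "set (map fst ordC) = TA_V"
    using sub by (intro card_subset_eq) (auto simp: TA_V_def)
  have sc: "snd ` set ordC \<subseteq> {..<3}" by (simp add: ordC_def)
  have c: "(\<lambda>v. the (map_of ordC v)) ` TA_V \<subseteq> {..<3}"
  proof
    fix y assume "y \<in> (\<lambda>v. the (map_of ordC v)) ` TA_V"
    then obtain v where v: "v \<in> fst ` set ordC" "y = the (map_of ordC v)" using s by auto
    then obtain z where "map_of ordC v = Some z" using v(1) by (metis domD dom_map_of_conv_image_fst)
    then have "(v, z) \<in> set ordC" "y = z" using v by (auto dest: map_of_SomeD)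
    then show "y \<in> {..<3}" using sc by force
  qed
  have "strongly_consistent TA_V EL (map fst ordC) (\<lambda>v. the (map_of ordC v))"
    by (rule chk_sound[OF CU d])
  then show ?thesis unfolding pthin_with_def EL_eq
    using d s c by blast
qed


lemma mono_pthin: assumes "pthin_with V E k" "k \<le> k'" shows "pthin_with V E k'"
proof -
  obtain ord cls where h: "distinct ord" "set ord = V" "cls ` V \<subseteq> {..<k}" "strongly_consistent V E ord cls"
    using assms(1) unfolding pthin_with_def by blast
  have "cls ` V \<subseteq> {..<k'}" using h(3) assms(2) by auto
  then show ?thesis unfolding pthin_with_def using h by blast
qed

theorem proposition6:
  shows "pthin TA_V TA_E = 3"
  unfolding pthin_def
proof (rule Least_equality)
  show "pthin_with TA_V TA_E 3" by (rule up3)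
next
  fix k assume k: "pthin_with TA_V TA_E k"
  show "3 \<le> k"
  proof (rule ccontr)
    assume "\<not> 3 \<le> k"
    then have "k \<le> 2" by simp
    then have "pthin_with TA_V TA_E 2" using mono_pthin[OF k] by blast
    then show False using low2 by blast
  qed
qed

end
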